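(* Let $p>5$ be a prime. Then $$\sum_{k=1}^{p-1}\frac{H_k^{(2)}}{(2k-1)16^k}\binom{2k}{k}^2\equiv4+p^2\left(4+8p-16p\,q_p(2)+\frac{2}{3}pB_{p-3}\right)\pmod{p^4}$$ and $$\sum_{k=1}^{\frac{p-1}{2}}\frac{H_k^{(2)}}{(2k-1)16^k}\binom{2k}{k}^2\equiv4-p\left(4+8p\,q_p(2)+\frac{7}{3}pB_{p-3}\right)\pmod{p^3}.$$
   Context: $H_n^{(2)}=\sum_{j=1}^n j^{-2}$. $q_p(2)=(2^{p-1}-1)/p$ is the Fermat quotient. Bernoulli numbers: $\sum_{n\ge0}B_nt^n/n!=t/(e^t-1)$. Congruences are between $p$-adic integers (rationals with denominator prime to $p$). *)

theory Defs
  imports "HOL-Computational_Algebra.Computational_Algebra"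
begin

definition bernoulli :: "nat \<Rightarrow> rat" where
  "bernoulli n = fact n * fps_nth (fps_X / (fps_exp 1 - 1)) n"

definition harm2 :: "nat \<Rightarrow> rat" where
  "harm2 n = (\<Sum>j=1..n. 1 / (of_nat j)^2)"

definition fermat_quot2 :: "nat \<Rightarrow> rat" where
  "fermat_quot2 p = (2^(p-1) - 1) / of_nat p"

text \<open>Congruence of rationals modulo an integer m: x - y = a/b with b coprime to m
  and m dividing a (p-adic integers congruence when m is a prime power).\<close>
definition qcong :: "rat \<Rightarrow> rat \<Rightarrow> int \<Rightarrow> bool" where
  "qcong x y m \<longleftrightarrow> (\<exists>a b. b \<noteq> 0 \<and> x - y = of_int a / of_int b \<and> coprime b m \<and> m dvd a)"

end

theory Submission
  imports Defs "HOL-Number_Theory.Residues"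
begin


definition pint :: "nat \<Rightarrow> rat \<Rightarrow> bool" where
  "pint p x \<longleftrightarrow> (\<exists>a b::int. coprime b (int p) \<and> x = of_int a / of_int b)"

definition punit :: "nat \<Rightarrow> rat \<Rightarrow> bool" where
  "punit p x \<longleftrightarrow> (\<exists>a b::int. coprime a (int p) \<and> coprime b (int p) \<and> x = of_int a / of_int b)"

context fixes p :: nat assumes pp: "prime p"
begin

lemma cop_nz: "coprime (b::int) (int p) \<Longrightarrow> b \<noteq> 0"
proof
  assume "coprime b (int p)" "b = 0"
  then have "is_unit (int p)" by simp
  then show False using pp by (simp add: prime_nat_iff)
qed

lemma pint_of_int[simp]: "pint p (of_int a)"
  unfolding pint_def by (rule exI[of _ a], rule exI[of _ 1]) simp

lemma pint_of_nat[simp]: "pint p (of_nat a)"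
  using pint_of_int[of "int a"] by simp

lemma pint_numeral[simp]: "pint p (numeral n)"
  using pint_of_int[of "numeral n"] by simp

lemma pint_0[simp]: "pint p 0" and pint_1[simp]: "pint p 1"
  using pint_of_int[of 0] pint_of_int[of 1] by simp_all

lemma pint_add[simp]: assumes "pint p x" "pint p y" shows "pint p (x + y)"
proof -
  obtain a b c d where x: "coprime b (int p)" "x = of_int a / of_int b"
    and y: "coprime d (int p)" "y = of_int c / of_int d"
    using assms unfolding pint_def by blast
  have "b \<noteq> 0" "d \<noteq> 0" using x y cop_nz by auto
  then have "x + y = of_int (a*d + c*b) / of_int (b*d)" using x y by (simp add: field_simps)
  moreover have "coprime (b*d) (int p)" using x y by simp
  ultimately show ?thesis unfolding pint_def by blast
qed

lemma pint_mult[simp]: assumes "pint p x" "pint p y" shows "pint p (x * y)"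
proof -
  obtain a b c d where x: "coprime b (int p)" "x = of_int a / of_int b"
    and y: "coprime d (int p)" "y = of_int c / of_int d"
    using assms unfolding pint_def by blast
  have "x * y = of_int (a*c) / of_int (b*d)" using x y by simp
  moreover have "coprime (b*d) (int p)" using x y by simp
  ultimately show ?thesis unfolding pint_def by blast
qed

lemma pint_uminus[simp]: assumes "pint p x" shows "pint p (- x)"
  using pint_mult[OF pint_of_int[of "-1"] assms] by simp

lemma pint_diff[simp]: assumes "pint p x" "pint p y" shows "pint p (x - y)"
  using pint_add[OF assms(1) pint_uminus[OF assms(2)]] by simp

lemma pint_power[simp]: "pint p x \<Longrightarrow> pint p (x ^ n)"
  by (induction n) auto

lemma pint_sum[simp]: "(\<And>i. i \<in> A \<Longrightarrow> pint p (f i)) \<Longrightarrow> pint p (sum f A)"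
  by (induction A rule: infinite_finite_induct) auto

lemma pint_prod[simp]: "(\<And>i. i \<in> A \<Longrightarrow> pint p (f i)) \<Longrightarrow> pint p (prod f A)"
  by (induction A rule: infinite_finite_induct) auto

lemma punit_1[simp]: "punit p 1"
  unfolding punit_def by (rule exI[of _ 1], rule exI[of _ 1]) simp

lemma punit_pint: "punit p x \<Longrightarrow> pint p x"
  unfolding punit_def pint_def by blast

lemma punit_inverse: assumes "punit p x" shows "punit p (inverse x)"
proof -
  obtain a b where x: "coprime a (int p)" "coprime b (int p)" "x = of_int a / of_int b"
    using assms unfolding punit_def by blast
  have "inverse x = of_int b / of_int a" using x by simp
  then show ?thesis using x unfolding punit_def by blast
qed

lemma pint_divide[simp]: "pint p x \<Longrightarrow> punit p y \<Longrightarrow> pint p (x / y)"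
  by (simp add: divide_inverse punit_inverse punit_pint)

lemma punit_mult[simp]: assumes "punit p x" "punit p y" shows "punit p (x * y)"
proof -
  obtain a b c d where x: "coprime a (int p)" "coprime b (int p)" "x = of_int a / of_int b"
    and y: "coprime c (int p)" "coprime d (int p)" "y = of_int c / of_int d"
    using assms unfolding punit_def by blast
  have "x * y = of_int (a*c) / of_int (b*d)" using x y by simp
  moreover have "coprime (b*d) (int p)" "coprime (a*c) (int p)" using x y by simp_all
  ultimately show ?thesis unfolding punit_def by blast
qed

lemma punit_power[simp]: "punit p x \<Longrightarrow> punit p (x ^ n)"
  by (induction n) auto

lemma punit_uminus[simp]: assumes "punit p x" shows "punit p (- x)"
proof -
  obtain a b where x: "coprime a (int p)" "coprime b (int p)" "x = of_int a / of_int b"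
    using assms unfolding punit_def by blast
  have "- x = of_int (-a) / of_int b" using x by simp
  moreover have "coprime (-a) (int p)" using x by simp
  ultimately show ?thesis using x unfolding punit_def by blast
qed

lemma punit_prod[simp]: "(\<And>i. i \<in> A \<Longrightarrow> punit p (f i)) \<Longrightarrow> punit p (prod f A)"
  by (induction A rule: infinite_finite_induct) auto

lemma punit_of_int: "coprime a (int p) \<Longrightarrow> punit p (of_int a)"
  unfolding punit_def by (rule exI[of _ a], rule exI[of _ 1]) simp

lemma punit_of_nat: assumes "\<not> p dvd n" shows "punit p (of_nat n)"
proof -
  have "coprime n p" using prime_imp_coprime[OF pp assms] by (metis coprime_commute)
  then show ?thesis using punit_of_int[of "int n"] by simp
qed

lemma punit_of_nat_less: "0 < n \<Longrightarrow> n < p \<Longrightarrow> punit p (of_nat n)"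
  by (rule punit_of_nat) (auto dest: dvd_imp_le)

lemma punit_numeral: "numeral n < p \<Longrightarrow> punit p (numeral n)"
  using punit_of_nat_less[of "numeral n"] by simp

lemma punit_fact: "n < p \<Longrightarrow> punit p (fact n)"
proof (induction n)
  case 0 then show ?case by simp
next
  case (Suc n) then show ?case
    using punit_of_nat_less[of "Suc n"] by (simp add: fact_Suc)
qed

lemma punit_add_p: assumes "punit p u" "pint p x" shows "punit p (u + of_nat p * x)"
proof -
  obtain a b c d where x: "coprime a (int p)" "coprime b (int p)" "u = of_int a / of_int b"
    and y: "coprime d (int p)" "x = of_int c / of_int d"
    using assms unfolding punit_def pint_def by blast
  have "b \<noteq> 0" "d \<noteq> 0" using x y cop_nz by auto
  then have "u + of_nat p * x = of_int (a*d + int p * (c*b)) / of_int (b*d)" unfolding x(3) y(2) by (simp add: field_simps)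
  moreover have "coprime (b*d) (int p)" using x y by simp
  moreover have "coprime (a*d + int p * (c*b)) (int p)"
  proof -
    have "gcd (int p) ((c*b) * int p + a*d) = gcd (int p) (a*d)" by (rule gcd_add_mult)
    moreover have "coprime (a*d) (int p)" using x y by simp
    ultimately show ?thesis by (simp add: coprime_iff_gcd_eq_1 gcd.commute ac_simps)
  qed
  ultimately show ?thesis unfolding punit_def by blast
qed

lemma qcong_intro: assumes "x - y = (of_nat p)^k * c" "pint p c" shows "qcong x y (int p ^ k)"
proof -
  obtain a b where c: "coprime b (int p)" "c = of_int a / of_int b" using assms unfolding pint_def by blast
  have "x - y = of_int (int p ^ k * a) / of_int b" using assms c by simp
  moreover have "coprime b (int p ^ k)" using c by simp
  moreover have "b \<noteq> 0" using c cop_nz by auto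
  ultimately show ?thesis unfolding qcong_def by (intro exI[of _ "int p ^ k * a"] exI[of _ b]) simp
qed

end



definition GB :: "rat fps" where "GB = fps_X / (fps_exp 1 - 1)"

lemma bernoulli_GB: "bernoulli n = fact n * GB $ n"
  by (simp add: bernoulli_def GB_def)

lemma GB_mult: "GB * (fps_exp 1 - 1) = fps_X"
proof -
  have nz: "fps_exp (1::rat) - 1 \<noteq> 0"
  proof
    assume "fps_exp (1::rat) - 1 = 0"
    then have "(fps_exp (1::rat) - 1) $ 1 = 0" by simp
    then show False by simp
  qed
  have "subdegree (fps_exp (1::rat) - 1) = 1"
    by (rule subdegreeI) auto
  then show ?thesis unfolding GB_def using nz by (intro fps_times_divide_eq) auto
qed

lemma tele: "(fps_exp 1 - 1) * (\<Sum>j<n. fps_exp (of_nat j)) = fps_exp (of_nat n) - (1::rat fps)"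
proof (induction n)
  case 0 then show ?case by simp
next
  case (Suc n)
  have "fps_exp (of_nat (Suc n)) = fps_exp (of_nat n) * fps_exp (1::rat)"
    by (simp add: fps_exp_add_mult[symmetric] add.commute)
  then show ?case using Suc by (simp add: algebra_simps)
qed

lemma fps_exp_m1_nth: "0 < d \<Longrightarrow> (fps_exp c - 1) $ d = (c::rat) ^ d / fact d"
  by simp

lemma faul: "(\<Sum>j<n. (of_nat j::rat) ^ k) / fact k
   = (\<Sum>i\<le>k. GB $ i * of_nat n ^ (Suc k - i) / fact (Suc k - i))"
proof -
  have "GB * (fps_exp (of_nat n) - 1) = fps_X * (\<Sum>j<n. fps_exp (of_nat j))"
    using GB_mult tele[of n] by (metis mult.assoc)
  then have "(GB * (fps_exp (of_nat n) - 1)) $ Suc k = (fps_X * (\<Sum>j<n. fps_exp (of_nat j))) $ Suc k"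
    by simp
  also have "\<dots> = (\<Sum>j<n. (of_nat j::rat) ^ k) / fact k"
    by (simp add: fps_sum_nth sum_divide_distrib)
  finally have e: "(GB * (fps_exp (of_nat n) - 1)) $ Suc k = (\<Sum>j<n. (of_nat j::rat) ^ k) / fact k" .
  have "(GB * (fps_exp (of_nat n) - 1)) $ Suc k = (\<Sum>i=0..Suc k. GB $ i * (fps_exp (of_nat n) - 1) $ (Suc k - i))"
    by (rule fps_mult_nth)
  also have "\<dots> = (\<Sum>i=0..k. GB $ i * (fps_exp (of_nat n) - 1) $ (Suc k - i))"
    by (simp add: sum.atLeast0_atMost_Suc)
  also have "\<dots> = (\<Sum>i\<le>k. GB $ i * of_nat n ^ (Suc k - i) / fact (Suc k - i))"
    unfolding atLeast0AtMost by (intro sum.cong refl, subst fps_exp_m1_nth) auto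
  finally show ?thesis using e by simp
qed

lemma GB0: "GB $ 0 = 1"
  using faul[where n=1 and k=0] by simp

lemma brec: assumes "k \<ge> 1" shows "GB $ k = - (\<Sum>i<k. GB $ i / fact (Suc k - i))"
proof -
  have "(\<Sum>i\<le>k. GB $ i * 1 / fact (Suc k - i)) = 0"
    using faul[where n=1 and k=k] assms by (simp add: zero_power)
  then have "(\<Sum>i<k. GB $ i / fact (Suc k - i)) + GB $ k = 0"
    by (simp add: lessThan_Suc_atMost[symmetric])
  then show ?thesis by (simp add: eq_neg_iff_add_eq_0 add.commute)
qed

context fixes p :: nat assumes pp: "prime p"
begin

lemma pint_bernoulli: "k + 2 \<le> p \<Longrightarrow> pint p (bernoulli k)"
proof (induction k rule: less_induct)
  case (less k)
  show ?case
  proof (cases "k = 0")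
    case True then show ?thesis by (simp add: bernoulli_GB GB0 pp)
  next
    case False
    then have eq: "bernoulli k = - (\<Sum>i<k. bernoulli i * (fact k / (fact i * fact (Suc k - i))))"
      using brec[of k] by (simp add: bernoulli_GB sum_distrib_left field_simps sum_negf)
    have "pint p (bernoulli i * (fact k / (fact i * fact (Suc k - i))))" if "i < k" for i
    proof -
      have "pint p (bernoulli i)" using less that by auto
      moreover have "pint p (fact k)" using pint_of_nat[OF pp, of "fact k"] by (simp add: of_nat_fact)
      moreover have "punit p (fact i * fact (Suc k - i))"
        using less that by (intro punit_mult[OF pp] punit_fact[OF pp]) auto
      ultimately show ?thesis using pp by simp
    qed
    then show ?thesis unfolding eq by (intro pint_uminus[OF pp] pint_sum[OF pp]) auto
  qed
qed

lemma faul_p: assumes "p > 5"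
  shows "\<exists>c. pint p c \<and> (\<Sum>j<p. (of_nat j::rat) ^ (p-3)) = of_nat p * bernoulli (p-3) + (of_nat p)^2 * c"
proof -
  define k where "k = p - 3"
  have pk: "p = k + 3" using assms unfolding k_def by simp
  have k3: "k \<ge> 3" using assms pk by simp
  have "(\<Sum>j<p. (of_nat j::rat) ^ k) = fact k * (\<Sum>i\<le>k. GB $ i * of_nat p ^ (Suc k - i) / fact (Suc k - i))"
    using faul[where n=p and k=k] by (simp add: field_simps)
  also have "\<dots> = (\<Sum>i\<le>k. fact k * GB $ i * of_nat p ^ (Suc k - i) / fact (Suc k - i))"
    by (simp add: sum_distrib_left mult.assoc)
  also have "\<dots> = (\<Sum>i<k. fact k * GB $ i * of_nat p ^ (Suc k - i) / fact (Suc k - i)) + of_nat p * bernoulli k"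
    by (simp add: lessThan_Suc_atMost[symmetric] bernoulli_GB)
  also have "(\<Sum>i<k. fact k * GB $ i * of_nat p ^ (Suc k - i) / fact (Suc k - i))
     = (of_nat p)^2 * (\<Sum>i<k. bernoulli i * of_nat p ^ (k - 1 - i) * (fact k / (fact i * fact (Suc k - i))))"
    unfolding sum_distrib_left
  proof (intro sum.cong refl)
    fix i assume i: "i \<in> {..<k}"
    then have "Suc k - i = 2 + (k - 1 - i)" by auto
    then have "(of_nat p::rat) ^ (Suc k - i) = (of_nat p)^2 * of_nat p ^ (k - 1 - i)"
      by (simp add: power_add power2_eq_square)
    then show "fact k * GB $ i * of_nat p ^ (Suc k - i) / fact (Suc k - i) =
         (of_nat p)^2 * (bernoulli i * of_nat p ^ (k - 1 - i) * (fact k / (fact i * fact (Suc k - i))))"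
      by (simp add: bernoulli_GB field_simps)
  qed
  finally have e: "(\<Sum>j<p. (of_nat j::rat) ^ k) = of_nat p * bernoulli k +
     (of_nat p)^2 * (\<Sum>i<k. bernoulli i * of_nat p ^ (k - 1 - i) * (fact k / (fact i * fact (Suc k - i))))"
    by simp
  have "pint p (\<Sum>i<k. bernoulli i * of_nat p ^ (k - 1 - i) * (fact k / (fact i * fact (Suc k - i))))"
  proof (intro pint_sum[OF pp])
    fix i assume i: "i \<in> {..<k}"
    have "pint p (bernoulli i)" using i pk by (intro pint_bernoulli) auto
    moreover have "pint p (fact k)" using pint_of_nat[OF pp, of "fact k"] by (simp add: of_nat_fact)
    moreover have "punit p (fact i * fact (Suc k - i))"
      using i pk by (intro punit_mult[OF pp] punit_fact[OF pp]) auto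
    ultimately show "pint p (bernoulli i * of_nat p ^ (k - 1 - i) * (fact k / (fact i * fact (Suc k - i))))"
      using pp by simp
  qed
  then show ?thesis using e pk by auto
qed

end



definition pcong :: "nat \<Rightarrow> nat \<Rightarrow> rat \<Rightarrow> rat \<Rightarrow> bool" where
  "pcong p k x y \<longleftrightarrow> (\<exists>c. pint p c \<and> x = y + (of_nat p)^k * c)"

lemma sum_rev1: fixes g :: "nat \<Rightarrow> rat" shows "(\<Sum>i=1..n. g (n + 1 - i)) = (\<Sum>i=1..n. (g i :: rat))"
  using sum.atLeastAtMost_rev[of g 1 n] by simp

lemma sum_split2: fixes f :: "nat \<Rightarrow> rat" shows "(\<Sum>j=1..2*m. f j) = (\<Sum>i=1..m. f i) + (\<Sum>i=1..m. (f (2*m+1-i) :: rat))"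
proof -
  have "(\<Sum>j=1..m+m. f j) = (\<Sum>j=1..m. f j) + (\<Sum>j=m+1..m+m. f j)"
    by (rule sum.ub_add_nat) simp
  also have "(\<Sum>j=m+1..m+m. f j) = (\<Sum>i=1..m. f (i + m))"
    using sum.shift_bounds_cl_nat_ivl[of f 1 m m] by (simp add: add.commute)
  also have "\<dots> = (\<Sum>i=1..m. f (m + 1 - i + m))"
    using sum_rev1[of "\<lambda>i. f (i + m)" m] by simp
  also have "\<dots> = (\<Sum>i=1..m. f (2*m+1-i))"
    by (intro sum.cong refl) (auto intro: arg_cong[where f=f])
  finally show ?thesis by (simp add: mult_2)
qed

lemma sum_evenodd: fixes f :: "nat \<Rightarrow> rat" shows "(\<Sum>j=1..2*m. f j) = (\<Sum>i=1..m. f (2*i)) + (\<Sum>i=1..m. (f (2*i-1) :: rat))"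
proof (induction m)
  case 0 then show ?case by simp
next
  case (Suc m)
  have "(\<Sum>j=1..2*Suc m. f j) = (\<Sum>j=1..2*m. f j) + f (2*m+1) + f (2*m+2)"
    by (simp add: add.assoc)
  then show ?case using Suc by (simp add: add_ac)
qed

lemma sum_odd_rev: fixes f :: "nat \<Rightarrow> rat" shows "(\<Sum>i=1..m. f (2*i-1)) = (\<Sum>i=1..m. (f (2*m+1-2*i) :: rat))"
proof -
  have "(\<Sum>i=1..m. f (2*i-1)) = (\<Sum>i=1..m. f (2*(m+1-i)-1))"
    using sum_rev1[of "\<lambda>i. f (2*i-1)" m] by simp
  also have "\<dots> = (\<Sum>i=1..m. f (2*m+1-2*i))"
    by (intro sum.cong refl) (auto intro: arg_cong[where f=f])
  finally show ?thesis .
qed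

context fixes p :: nat assumes pp: "prime p" and p5: "p > 5"
begin

lemma p2: "p > 2" using p5 by simp

lemma pcong_refl[simp]: "pcong p k x x"
  unfolding pcong_def by (rule exI[of _ 0]) (simp add: pp)

lemma pcong_sym: assumes "pcong p k x y" shows "pcong p k y x"
proof -
  obtain c where c: "pint p c" "x = y + of_nat p ^ k * c" using assms unfolding pcong_def by blast
  show ?thesis unfolding pcong_def by (rule exI[of _ "- c"]) (use c pp in simp)
qed

lemma pcong_trans: assumes "pcong p k x y" "pcong p k y z" shows "pcong p k x z"
proof -
  obtain c where c: "pint p c" "x = y + of_nat p ^ k * c" using assms unfolding pcong_def by blast
  obtain d where d: "pint p d" "y = z + of_nat p ^ k * d" using assms unfolding pcong_def by blast
  show ?thesis unfolding pcong_def by (rule exI[of _ "c + d"]) (use c d pp in \<open>simp add: algebra_simps\<close>)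
qed

lemma pcong_add: assumes "pcong p k x y" "pcong p k u v" shows "pcong p k (x + u) (y + v)"
proof -
  obtain c where c: "pint p c" "x = y + of_nat p ^ k * c" using assms unfolding pcong_def by blast
  obtain d where d: "pint p d" "u = v + of_nat p ^ k * d" using assms unfolding pcong_def by blast
  show ?thesis unfolding pcong_def by (rule exI[of _ "c + d"]) (use c d pp in \<open>simp add: algebra_simps\<close>)
qed

lemma pcong_diff: assumes "pcong p k x y" "pcong p k u v" shows "pcong p k (x - u) (y - v)"
proof -
  obtain c where c: "pint p c" "x = y + of_nat p ^ k * c" using assms unfolding pcong_def by blast
  obtain d where d: "pint p d" "u = v + of_nat p ^ k * d" using assms unfolding pcong_def by blast
  show ?thesis unfolding pcong_def by (rule exI[of _ "c - d"]) (use c d pp in \<open>simp add: algebra_simps\<close>)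
qed

lemma pcong_cmult: assumes "pint p a" "pcong p k x y" shows "pcong p k (a * x) (a * y)"
proof -
  obtain c where c: "pint p c" "x = y + of_nat p ^ k * c" using assms unfolding pcong_def by blast
  show ?thesis unfolding pcong_def by (rule exI[of _ "a * c"]) (use c assms pp in \<open>simp add: algebra_simps\<close>)
qed

lemma pcong_mono: "pcong p k x y \<Longrightarrow> j \<le> k \<Longrightarrow> pcong p j x y"
  unfolding pcong_def
proof clarify
  fix c assume c: "pint p c" "x = y + of_nat p ^ k * c" and jk: "j \<le> k"
  have "of_nat p ^ k * c = (of_nat p :: rat) ^ j * (of_nat p ^ (k - j) * c)"
    using jk by (simp add: power_add[symmetric])
  moreover have "pint p (of_nat p ^ (k - j) * c)" using c pp by simp
  ultimately show "\<exists>c'. pint p c' \<and> y + of_nat p ^ k * c = y + of_nat p ^ j * c'"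
    by metis
qed

lemma pcong_intro: "pint p c \<Longrightarrow> x = y + (of_nat p)^k * c \<Longrightarrow> pcong p k x y"
  unfolding pcong_def by blast

lemma pcong_pmult: assumes "pcong p k x y" shows "pcong p (Suc k) (of_nat p * x) (of_nat p * y)"
proof -
  obtain c where c: "pint p c" "x = y + of_nat p ^ k * c" using assms unfolding pcong_def by blast
  show ?thesis unfolding pcong_def by (rule exI[of _ "c"]) (use c pp in \<open>simp add: algebra_simps\<close>)
qed

lemma pcong_sum: fixes f g :: "'a \<Rightarrow> rat" shows "(\<And>i. i \<in> A \<Longrightarrow> pcong p k (f i) (g i)) \<Longrightarrow> pcong p k (sum f A) (sum g A)"
  by (induction A rule: infinite_finite_induct) (auto intro: pcong_add)

lemma punit_j: "0 < j \<Longrightarrow> j < p \<Longrightarrow> punit p (of_nat j)"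
  by (rule punit_of_nat_less[OF pp])

lemma punit_2: "punit p 2" using punit_of_nat_less[OF pp, of 2] p5 by simp
lemma punit_3: "punit p 3" using punit_of_nat_less[OF pp, of 3] p5 by simp

lemma sum_refl: "(\<Sum>j=1..p-1. f j) = (\<Sum>j=1..p-1. (f (p - j) :: rat))"
  using sum_rev1[of f "p-1"] p5 by simp

lemma H1: "pcong p 1 (\<Sum>j=1..p-1. 1 / of_nat j) 0"
proof -
  let ?c = "(\<Sum>j=1..p-1. (1 / (of_nat j * of_nat (p - j) :: rat))) / 2"
  have "2 * (\<Sum>j=1..p-1. 1 / (of_nat j :: rat)) = (\<Sum>j=1..p-1. 1 / of_nat j + 1 / of_nat (p - j))"
    using sum_refl[of "\<lambda>j. 1 / of_nat j"] by (simp add: sum.distrib)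
  also have "\<dots> = (\<Sum>j=1..p-1. of_nat p * (1 / (of_nat j * of_nat (p - j))))"
  proof (intro sum.cong refl)
    fix j assume "j \<in> {1..p-1}"
    then have j: "0 < j" "j < p" by auto
    then have "(of_nat (p - j) :: rat) = of_nat p - of_nat j" by (simp add: of_nat_diff)
    then show "1 / of_nat j + 1 / of_nat (p - j) = of_nat p * (1 / (of_nat j * of_nat (p - j)) :: rat)"
      using j by (simp add: field_simps)
  qed
  finally have e0: "2 * (\<Sum>j=1..p-1. 1 / (of_nat j :: rat)) = of_nat p * (\<Sum>j=1..p-1. (1 / (of_nat j * of_nat (p - j))))"
    by (simp only: sum_distrib_left)
  have e: "(\<Sum>j=1..p-1. 1 / (of_nat j :: rat)) = of_nat p * ?c"
    using e0 by (simp add: field_simps)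
  have "pint p ?c"
    by (intro pint_sum[OF pp] pint_divide[OF pp] punit_mult[OF pp] punit_j) (auto simp: pp punit_2)
  then show ?thesis using e by (intro pcong_intro) auto
qed

lemma H3: "pcong p 1 (\<Sum>j=1..p-1. 1 / of_nat j ^ 3) 0"
proof -
  let ?f = "\<lambda>j. ((of_nat j)^2 - of_nat j * of_nat (p - j) + (of_nat (p - j))^2) / ((of_nat j)^3 * (of_nat (p - j))^3 :: rat)"
  let ?c = "(\<Sum>j=1..p-1. ?f j) / 2"
  have "2 * (\<Sum>j=1..p-1. 1 / (of_nat j :: rat)^3) = (\<Sum>j=1..p-1. 1 / (of_nat j)^3 + 1 / (of_nat (p - j))^3)"
    using sum_refl[of "\<lambda>j. 1 / (of_nat j)^3"] by (simp add: sum.distrib)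
  also have "\<dots> = (\<Sum>j=1..p-1. of_nat p * (((of_nat j)^2 - of_nat j * of_nat (p - j) + (of_nat (p - j))^2) / ((of_nat j)^3 * (of_nat (p - j))^3)))"
  proof (intro sum.cong refl)
    fix j assume "j \<in> {1..p-1}"
    then have j: "0 < j" "j < p" by auto
    then have pe: "(of_nat p :: rat) = of_nat j + of_nat (p - j)" by (simp add: of_nat_diff)
    have nz: "(of_nat (p - j) :: rat) \<noteq> 0" "(of_nat j :: rat) \<noteq> 0" using j by auto
    show "1 / (of_nat j)^3 + 1 / (of_nat (p - j))^3 = (of_nat p :: rat) * (((of_nat j)^2 - of_nat j * of_nat (p - j) + (of_nat (p - j))^2) / ((of_nat j)^3 * (of_nat (p - j))^3))"
      unfolding pe using nz by (simp add: field_simps) (simp add: algebra_simps power3_eq_cube power2_eq_square)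
  qed
  finally have e0: "2 * (\<Sum>j=1..p-1. 1 / (of_nat j :: rat)^3) = of_nat p * (\<Sum>j=1..p-1. ?f j)"
    by (simp only: sum_distrib_left)
  have e: "(\<Sum>j=1..p-1. 1 / (of_nat j :: rat)^3) = of_nat p * ?c"
    using e0 by (simp add: field_simps)
  have "pint p ?c"
    by (intro pint_sum[OF pp] pint_divide[OF pp] pint_mult[OF pp] punit_mult[OF pp] punit_power[OF pp] punit_j pint_add[OF pp] pint_diff[OF pp] pint_power[OF pp]) (auto simp: pp punit_2)
  then show ?thesis using e by (intro pcong_intro) auto
qed

end



context fixes p :: nat assumes pp: "prime p" and p5: "p > 5"
begin

lemma p_odd: "p = 2 * ((p - 1) div 2) + 1"
proof -
  have "odd p" using prime_odd_nat[OF pp] p5 by simp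
  then show ?thesis by presburger
qed

lemma pint_frac: "pint p (numeral a / numeral b)" if "numeral b < p"
  using pint_divide[OF pp pint_numeral[OF pp] punit_numeral[OF pp that]] .

lemma R1: "pcong p 2 (\<Sum>j=1..p-1. 1 / (of_nat j)^2)
   (2 * (\<Sum>i=1..(p-1) div 2. 1 / (of_nat i)^2) + 2 * of_nat p * (\<Sum>i=1..(p-1) div 2. 1 / (of_nat i)^3))"
proof -
  define m where "m = (p - 1) div 2"
  have pm: "p = 2*m+1" using p_odd unfolding m_def .
  have eA: "(\<Sum>j=1..p-1. 1 / (of_nat j :: rat)^2) = (\<Sum>i=1..m. 1 / (of_nat i)^2) + (\<Sum>i=1..m. 1 / (of_nat (p - i))^2)"
    using sum_split2[of "\<lambda>j. 1 / (of_nat j)^2" m] pm by simp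
  have X0: "pcong p 2 (\<Sum>i=1..m. 1 / (of_nat (p - i))^2) (\<Sum>i=1..m. 1 / (of_nat i)^2 + 2 * of_nat p * (1 / (of_nat i)^3))"
  proof (intro pcong_sum[OF pp p5])
    fix i assume "i \<in> {1..m}"
    then have i: "0 < i" "i < p" "0 < p - i" "p - i < p" using pm by auto
    define x where "x = (of_nat i :: rat)"
    have pe: "(of_nat (p - i) :: rat) = of_nat p - x" using i unfolding x_def by (simp add: of_nat_diff)
    have nz: "x \<noteq> 0" "of_nat p - x \<noteq> 0" using i pe unfolding x_def by (auto simp flip: pe)
    have "1 / (of_nat (p - i))^2 = 1 / x^2 + 2 * of_nat p * (1 / x^3) + (of_nat p)^2 * ((3*x - 2 * of_nat p) / (x^3 * (of_nat (p - i))^2))"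
      unfolding pe using nz by (simp add: field_simps) (simp add: eval_nat_numeral algebra_simps)
    moreover have "pint p ((3*x - 2 * of_nat p) / (x^3 * (of_nat (p - i))^2))"
      unfolding x_def using i by (intro pint_divide[OF pp] pint_diff[OF pp] pint_mult[OF pp] punit_mult[OF pp] punit_power[OF pp] punit_j[OF pp p5]) (auto simp: pp)
    ultimately show "pcong p 2 (1 / (of_nat (p - i))^2) (1 / (of_nat i)^2 + 2 * of_nat p * (1 / (of_nat i)^3))"
      unfolding x_def by (intro pcong_intro[OF pp p5]) auto
  qed
  have eX: "(\<Sum>i=1..m. 1 / (of_nat i)^2 + 2 * of_nat p * (1 / (of_nat i)^3)) =
     (\<Sum>i=1..m. 1 / (of_nat i :: rat)^2) + 2 * of_nat p * (\<Sum>i=1..m. 1 / (of_nat i)^3)"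
    by (simp only: sum.distrib sum_distrib_left)
  have "pcong p 2 (\<Sum>j=1..p-1. 1 / (of_nat j :: rat)^2) ((\<Sum>i=1..m. 1 / (of_nat i)^2) +
     ((\<Sum>i=1..m. 1 / (of_nat i :: rat)^2) + 2 * of_nat p * (\<Sum>i=1..m. 1 / (of_nat i)^3)))"
    unfolding eA by (rule pcong_add[OF pp p5 pcong_refl[OF pp p5] X0[unfolded eX]])
  then show ?thesis unfolding m_def[symmetric] by (simp add: algebra_simps)
qed


lemma R2: "pcong p 2 (\<Sum>j=1..p-1. 1 / (of_nat j)^2)
   ((\<Sum>i=1..(p-1) div 2. 1 / (of_nat i)^2) / 2 + of_nat p / 4 * (\<Sum>i=1..(p-1) div 2. 1 / (of_nat i)^3))"
proof -
  define m where "m = (p - 1) div 2"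
  have pm: "p = 2*m+1" using p_odd unfolding m_def .
  have eA: "(\<Sum>j=1..p-1. 1 / (of_nat j :: rat)^2) = (\<Sum>i=1..m. 1 / (of_nat (2*i))^2) + (\<Sum>i=1..m. 1 / (of_nat (p - 2*i))^2)"
    using sum_evenodd[of "\<lambda>j. 1 / (of_nat j)^2" m] sum_odd_rev[of "\<lambda>j. 1 / (of_nat j)^2" m] pm by simp
  have eE: "(\<Sum>i=1..m. 1 / (of_nat (2*i) :: rat)^2) = (\<Sum>i=1..m. 1 / (of_nat i)^2) / 4"
    by (simp add: sum_divide_distrib power_mult_distrib mult.commute)
  have X0: "pcong p 2 (\<Sum>i=1..m. 1 / (of_nat (p - 2*i))^2) (\<Sum>i=1..m. (1 / (of_nat i)^2) / 4 + of_nat p / 4 * (1 / (of_nat i)^3))"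
  proof (intro pcong_sum[OF pp p5])
    fix i assume "i \<in> {1..m}"
    then have i: "0 < i" "i < p" "0 < p - 2*i" "p - 2*i < p" using pm by auto
    define x where "x = (of_nat i :: rat)"
    have pe: "(of_nat (p - 2*i) :: rat) = of_nat p - 2*x" using i unfolding x_def by (simp add: of_nat_diff)
    have nz: "x \<noteq> 0" "of_nat p - 2*x \<noteq> 0" using i pe unfolding x_def by (auto simp flip: pe)
    have "1 / (of_nat (p - 2*i))^2 = (1 / x^2) / 4 + of_nat p / 4 * (1 / x^3) + (of_nat p)^2 * ((6*x - 2 * of_nat p) / (2^3 * x^3 * (of_nat (p - 2*i))^2))"
      unfolding pe using nz by (simp add: field_simps) (simp add: eval_nat_numeral algebra_simps)
    moreover have "pint p ((6*x - 2 * of_nat p) / (2^3 * x^3 * (of_nat (p - 2*i))^2))"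
      unfolding x_def using i p5 by (intro pint_divide[OF pp] pint_diff[OF pp] pint_mult[OF pp] punit_mult[OF pp] punit_power[OF pp] punit_j[OF pp p5] punit_2[OF pp p5]) (auto simp: pp)
    ultimately show "pcong p 2 (1 / (of_nat (p - 2*i))^2) ((1 / (of_nat i)^2) / 4 + of_nat p / 4 * (1 / (of_nat i)^3))"
      unfolding x_def by (intro pcong_intro[OF pp p5]) auto
  qed
  have eX: "(\<Sum>i=1..m. (1 / (of_nat i)^2) / 4 + of_nat p / 4 * (1 / (of_nat i)^3)) =
     (\<Sum>i=1..m. 1 / (of_nat i :: rat)^2) / 4 + of_nat p / 4 * (\<Sum>i=1..m. 1 / (of_nat i)^3)"
    by (simp only: sum.distrib sum_distrib_left sum_divide_distrib)
  have "pcong p 2 (\<Sum>j=1..p-1. 1 / (of_nat j :: rat)^2) ((\<Sum>i=1..m. 1 / (of_nat i)^2) / 4 +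
     ((\<Sum>i=1..m. 1 / (of_nat i :: rat)^2) / 4 + of_nat p / 4 * (\<Sum>i=1..m. 1 / (of_nat i)^3)))"
    unfolding eA eE by (rule pcong_add[OF pp p5 pcong_refl[OF pp p5] X0[unfolded eX]])
  then show ?thesis unfolding m_def[symmetric] by (simp add: algebra_simps)
qed

lemma Hh_T: "pcong p 2 (\<Sum>i=1..(p-1) div 2. 1 / (of_nat i)^2)
   (- (7/6) * of_nat p * (\<Sum>i=1..(p-1) div 2. 1 / (of_nat i)^3))"
  and A_T: "pcong p 2 (\<Sum>j=1..p-1. 1 / (of_nat j)^2)
   (- (1/3) * of_nat p * (\<Sum>i=1..(p-1) div 2. 1 / (of_nat i)^3))"
proof -
  define Hh where "Hh = (\<Sum>i=1..(p-1) div 2. 1 / (of_nat i :: rat)^2)"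
  define T where "T = (\<Sum>i=1..(p-1) div 2. 1 / (of_nat i :: rat)^3)"
  define A where "A = (\<Sum>j=1..p-1. 1 / (of_nat j :: rat)^2)"
  obtain c1 where c1: "pint p c1" "A = 2 * Hh + 2 * of_nat p * T + (of_nat p)^2 * c1"
    using R1 unfolding pcong_def Hh_def T_def A_def by blast
  obtain c2 where c2: "pint p c2" "A = Hh / 2 + of_nat p / 4 * T + (of_nat p)^2 * c2"
    using R2 unfolding pcong_def Hh_def T_def A_def by blast
  have e1: "Hh = - (7/6) * of_nat p * T + (of_nat p)^2 * ((2/3) * (c2 - c1))"
    using c1(2) c2(2) by (simp add: field_simps)
  have e2: "A = - (1/3) * of_nat p * T + (of_nat p)^2 * ((4/3) * c2 - (1/3) * c1)"
    using c1(2) c2(2) by (simp add: field_simps)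
  have u3: "pint p (2/3)" "pint p (4/3)" "pint p (1/3)" using punit_3[OF pp p5] by (simp_all add: pp)
  show "pcong p 2 (\<Sum>i=1..(p-1) div 2. 1 / (of_nat i)^2)
   (- (7/6) * of_nat p * (\<Sum>i=1..(p-1) div 2. 1 / (of_nat i)^3))"
    unfolding Hh_def[symmetric] T_def[symmetric] by (rule pcong_intro[OF pp p5 _ e1], intro pint_mult[OF pp] pint_diff[OF pp]) (use c1 c2 u3 in auto)
  show "pcong p 2 (\<Sum>j=1..p-1. 1 / (of_nat j)^2)
   (- (1/3) * of_nat p * (\<Sum>i=1..(p-1) div 2. 1 / (of_nat i)^3))"
    unfolding A_def[symmetric] T_def[symmetric] by (rule pcong_intro[OF pp p5 _ e2], intro pint_mult[OF pp] pint_diff[OF pp]) (use c1 c2 u3 in auto)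
qed

end



context fixes p :: nat assumes pp: "prime p" and p5: "p > 5"
begin

lemma fermat_nat: assumes "0 < i" "i < p" shows "\<exists>t::nat. i ^ (p - 1) = t * p + 1"
proof -
  have "\<not> p dvd i" using assms by (auto dest: dvd_imp_le)
  then have "[i ^ (p - 1) = 1] (mod p)" by (rule fermat_theorem[OF pp])
  moreover have "1 \<le> i ^ (p - 1)" using assms by simp
  ultimately show ?thesis using cong_le_nat by blast
qed

lemma fermat_rat: assumes "0 < i" "i < p"
  shows "\<exists>t. pint p t \<and> (of_nat i :: rat) ^ (p - 1) = 1 + of_nat p * t"
proof -
  obtain t :: nat where "i ^ (p - 1) = t * p + 1" using fermat_nat[OF assms] by blast
  then have "(of_nat i :: rat) ^ (p - 1) = 1 + of_nat p * of_nat t"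
    by (metis of_nat_power of_nat_add of_nat_mult of_nat_1 add.commute mult.commute)
  then show ?thesis using pp by (intro exI[of _ "of_nat t"]) simp
qed

lemma fq: "\<exists>t. pint p t \<and> fermat_quot2 p = t" and fq2: "(2::rat) ^ (p - 1) = 1 + of_nat p * fermat_quot2 p"
proof -
  obtain t where t: "pint p t" "(of_nat 2 :: rat) ^ (p - 1) = 1 + of_nat p * t"
    using fermat_rat[of 2] p5 by auto
  have pnz: "(of_nat p :: rat) \<noteq> 0" using p5 by simp
  have "fermat_quot2 p = t" unfolding fermat_quot2_def using t pnz by (simp add: field_simps)
  then show "\<exists>t. pint p t \<and> fermat_quot2 p = t" using t by blast
  show "(2::rat) ^ (p - 1) = 1 + of_nat p * fermat_quot2 p"
    unfolding fermat_quot2_def using pnz by simp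
qed

lemma pint_fq: "pint p (fermat_quot2 p)" using fq by blast

lemma binom1: assumes "pint p x" "pint p y"
  shows "\<exists>r. pint p r \<and> (x + of_nat p * y) ^ Suc e = x ^ Suc e + of_nat (Suc e) * of_nat p * y * x ^ e + (of_nat p)^2 * r"
proof (induction e)
  case 0 then show ?case by (intro exI[of _ 0]) (simp add: pp)
next
  case (Suc e)
  then obtain r where r: "pint p r" "(x + of_nat p * y) ^ Suc e = x ^ Suc e + of_nat (Suc e) * of_nat p * y * x ^ e + (of_nat p)^2 * r"
    by blast
  have "(x + of_nat p * y) ^ Suc (Suc e) = (x + of_nat p * y) * (x ^ Suc e + of_nat (Suc e) * of_nat p * y * x ^ e + (of_nat p)^2 * r)"
    using r by simp
  also have "\<dots> = x ^ Suc (Suc e) + of_nat (Suc (Suc e)) * of_nat p * y * x ^ Suc e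
      + (of_nat p)^2 * (of_nat (Suc e) * y * y * x ^ e + x * r + of_nat p * y * r)"
    by (simp add: algebra_simps power2_eq_square)
  finally show ?case using r assms pp by (intro exI[of _ "of_nat (Suc e) * y * y * x ^ e + x * r + of_nat p * y * r"]) auto
qed

end



context fixes p :: nat assumes pp: "prime p" and p5: "p > 5"
begin

lemma e_even: "even (p - 3)" using p_odd[OF pp p5] by presburger

lemma refl_even: assumes "j \<le> p" shows "(of_nat (p - j) :: rat) ^ (p - 3) = (of_nat j + of_nat p * (-1)) ^ Suc (p - 4)"
proof -
  have "(of_nat (p - j) :: rat) = - (of_nat j + of_nat p * (-1))" using assms by (simp add: of_nat_diff)
  then have "(of_nat (p - j) :: rat) ^ (p - 3) = (- (of_nat j + of_nat p * (-1))) ^ (p - 3)" by simp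
  also have "\<dots> = (of_nat j + of_nat p * (-1)) ^ (p - 3)"
    by (rule Parity.power_minus_even[OF e_even])
  finally show ?thesis using p5 by (simp add: Suc_diff_Suc numeral_3_eq_3 numeral_eq_Suc)
qed

lemma S1: "pcong p 2 (\<Sum>j=1..p-1. (of_nat j::rat) ^ (p - 3))
   (2 * (\<Sum>i=1..(p-1) div 2. (of_nat i) ^ (p - 3)) - of_nat (p - 3) * of_nat p * (\<Sum>i=1..(p-1) div 2. (of_nat i) ^ (p - 4)))"
proof -
  define m where "m = (p - 1) div 2"
  have pm: "p = 2*m+1" using p_odd[OF pp p5] unfolding m_def .
  have e3: "Suc (p - 4) = p - 3" using p5 by simp
  have eA: "(\<Sum>j=1..p-1. (of_nat j :: rat) ^ (p - 3)) = (\<Sum>i=1..m. (of_nat i) ^ (p - 3)) + (\<Sum>i=1..m. (of_nat (p - i)) ^ (p - 3))"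
    using sum_split2[of "\<lambda>j. (of_nat j) ^ (p - 3)" m] pm by simp
  have X0: "pcong p 2 (\<Sum>i=1..m. (of_nat (p - i) :: rat) ^ (p - 3)) (\<Sum>i=1..m. (of_nat i) ^ (p - 3) - of_nat (p - 3) * of_nat p * (of_nat i) ^ (p - 4))"
  proof (intro pcong_sum[OF pp p5])
    fix i assume "i \<in> {1..m}"
    then have i: "i \<le> p" using pm by auto
    obtain r where r: "pint p r" "(of_nat i + of_nat p * (-1)) ^ Suc (p - 4) = (of_nat i :: rat) ^ Suc (p - 4) + of_nat (Suc (p - 4)) * of_nat p * (-1) * (of_nat i) ^ (p - 4) + (of_nat p)^2 * r"
      using binom1[OF pp p5, of "of_nat i" "-1" "p - 4"] pp by auto
    show "pcong p 2 ((of_nat (p - i) :: rat) ^ (p - 3)) ((of_nat i) ^ (p - 3) - of_nat (p - 3) * of_nat p * (of_nat i) ^ (p - 4))"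
      unfolding refl_even[OF i] using r e3 by (intro pcong_intro[OF pp p5]) auto
  qed
  have eX: "(\<Sum>i=1..m. (of_nat i :: rat) ^ (p - 3) - of_nat (p - 3) * of_nat p * (of_nat i) ^ (p - 4)) =
     (\<Sum>i=1..m. (of_nat i :: rat) ^ (p - 3)) - of_nat (p - 3) * of_nat p * (\<Sum>i=1..m. (of_nat i) ^ (p - 4))"
    by (simp only: sum_subtractf sum_distrib_left)
  have "pcong p 2 (\<Sum>j=1..p-1. (of_nat j :: rat) ^ (p - 3)) ((\<Sum>i=1..m. (of_nat i) ^ (p - 3)) +
     ((\<Sum>i=1..m. (of_nat i :: rat) ^ (p - 3)) - of_nat (p - 3) * of_nat p * (\<Sum>i=1..m. (of_nat i) ^ (p - 4))))"
    unfolding eA by (rule pcong_add[OF pp p5 pcong_refl[OF pp p5] X0[unfolded eX]])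
  then show ?thesis unfolding m_def[symmetric] by (simp add: algebra_simps)
qed

lemma S2: "pcong p 2 (\<Sum>j=1..p-1. (of_nat j::rat) ^ (p - 3))
   (2 * 2 ^ (p - 3) * (\<Sum>i=1..(p-1) div 2. (of_nat i) ^ (p - 3)) - of_nat (p - 3) * of_nat p * 2 ^ (p - 4) * (\<Sum>i=1..(p-1) div 2. (of_nat i) ^ (p - 4)))"
proof -
  define m where "m = (p - 1) div 2"
  have pm: "p = 2*m+1" using p_odd[OF pp p5] unfolding m_def .
  have e3: "Suc (p - 4) = p - 3" using p5 by simp
  have eA: "(\<Sum>j=1..p-1. (of_nat j :: rat) ^ (p - 3)) = (\<Sum>i=1..m. (of_nat (2*i)) ^ (p - 3)) + (\<Sum>i=1..m. (of_nat (p - 2*i)) ^ (p - 3))"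
    using sum_evenodd[of "\<lambda>j. (of_nat j) ^ (p - 3)" m] sum_odd_rev[of "\<lambda>j. (of_nat j) ^ (p - 3)" m] pm by simp
  have eE: "(\<Sum>i=1..m. (of_nat (2*i) :: rat) ^ (p - 3)) = 2 ^ (p - 3) * (\<Sum>i=1..m. (of_nat i) ^ (p - 3))"
    by (simp add: sum_distrib_left power_mult_distrib)
  have X0: "pcong p 2 (\<Sum>i=1..m. (of_nat (p - 2*i) :: rat) ^ (p - 3)) (\<Sum>i=1..m. 2 ^ (p - 3) * (of_nat i) ^ (p - 3) - of_nat (p - 3) * of_nat p * 2 ^ (p - 4) * (of_nat i) ^ (p - 4))"
  proof (intro pcong_sum[OF pp p5])
    fix i assume "i \<in> {1..m}"
    then have i: "2*i \<le> p" using pm by auto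
    obtain r where r: "pint p r" "(of_nat (2*i) + of_nat p * (-1)) ^ Suc (p - 4) = (of_nat (2*i) :: rat) ^ Suc (p - 4) + of_nat (Suc (p - 4)) * of_nat p * (-1) * (of_nat (2*i)) ^ (p - 4) + (of_nat p)^2 * r"
      using binom1[OF pp p5, of "of_nat (2*i)" "-1" "p - 4"] pp by auto
    show "pcong p 2 ((of_nat (p - 2*i) :: rat) ^ (p - 3)) (2 ^ (p - 3) * (of_nat i) ^ (p - 3) - of_nat (p - 3) * of_nat p * 2 ^ (p - 4) * (of_nat i) ^ (p - 4))"
      unfolding refl_even[OF i] using r e3 by (intro pcong_intro[OF pp p5]) (auto simp: power_mult_distrib)
  qed
  have eX: "(\<Sum>i=1..m. 2 ^ (p - 3) * (of_nat i :: rat) ^ (p - 3) - of_nat (p - 3) * of_nat p * 2 ^ (p - 4) * (of_nat i) ^ (p - 4)) =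
     2 ^ (p - 3) * (\<Sum>i=1..m. (of_nat i :: rat) ^ (p - 3)) - of_nat (p - 3) * of_nat p * 2 ^ (p - 4) * (\<Sum>i=1..m. (of_nat i) ^ (p - 4))"
    by (simp only: sum_subtractf sum_distrib_left)
  have "pcong p 2 (\<Sum>j=1..p-1. (of_nat j :: rat) ^ (p - 3)) (2 ^ (p - 3) * (\<Sum>i=1..m. (of_nat i) ^ (p - 3)) +
     (2 ^ (p - 3) * (\<Sum>i=1..m. (of_nat i :: rat) ^ (p - 3)) - of_nat (p - 3) * of_nat p * 2 ^ (p - 4) * (\<Sum>i=1..m. (of_nat i) ^ (p - 4))))"
    unfolding eA eE by (rule pcong_add[OF pp p5 pcong_refl[OF pp p5] X0[unfolded eX]])
  then show ?thesis unfolding m_def[symmetric] by (simp add: algebra_simps)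
qed

end



context fixes p :: nat assumes pp: "prime p" and p5: "p > 5"
begin

lemma S_faul: "pcong p 2 (\<Sum>j=1..p-1. (of_nat j::rat) ^ (p - 3)) (of_nat p * bernoulli (p - 3))"
proof -
  obtain c where c: "pint p c" "(\<Sum>j<p. (of_nat j::rat) ^ (p-3)) = of_nat p * bernoulli (p-3) + (of_nat p)^2 * c"
    using faul_p[OF pp p5] by blast
  have "(\<Sum>j<p. (of_nat j::rat) ^ (p-3)) = (\<Sum>j=0..p-1. (of_nat j::rat) ^ (p-3))"
    using p5 by (intro sum.cong) auto
  also have "\<dots> = (\<Sum>j=1..p-1. (of_nat j::rat) ^ (p-3))"
    using p5 by (simp add: sum.atLeast_Suc_atMost)
  finally show ?thesis using c by (intro pcong_intro[OF pp p5]) auto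
qed

lemma V_B: "pcong p 1 (\<Sum>i=1..(p-1) div 2. (of_nat i :: rat) ^ (p - 4)) (- 2 * bernoulli (p - 3))"
proof -
  define S where "S = (\<Sum>j=1..p-1. (of_nat j::rat) ^ (p - 3))"
  define U where "U = (\<Sum>i=1..(p-1) div 2. (of_nat i :: rat) ^ (p - 3))"
  define V where "V = (\<Sum>i=1..(p-1) div 2. (of_nat i :: rat) ^ (p - 4))"
  define B where "B = bernoulli (p - 3)"
  define P where "P = (of_nat p :: rat)"
  define e where "e = (of_nat (p - 3) :: rat)"
  define t where "t = (2::rat) ^ (p - 3)"
  define s where "s = (2::rat) ^ (p - 4)"
  define q where "q = fermat_quot2 p"
  obtain c1 where c1: "pint p c1" "S = 2 * U - e * P * V + P^2 * c1"
    using S1[OF pp p5] unfolding pcong_def S_def U_def V_def e_def P_def by blast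
  obtain c2 where c2: "pint p c2" "S = 2 * t * U - e * P * s * V + P^2 * c2"
    using S2[OF pp p5] unfolding pcong_def S_def U_def V_def e_def P_def t_def s_def by blast
  obtain c3 where c3: "pint p c3" "S = P * B + P^2 * c3"
    using S_faul unfolding pcong_def S_def B_def P_def by blast
  have p3: "p - 3 = Suc (p - 4)" using p5 by simp
  have ts: "t = 2 * s" unfolding t_def s_def p3 by simp
  have p1: "p - 1 = (p - 3) + 2" using p5 by simp
  have "(2::rat) ^ (p - 1) = 2 ^ (p - 3) * 2 ^ 2" unfolding p1 by (rule power_add)
  then have t4: "4 * t = 1 + P * q" unfolding t_def P_def q_def using fq2[OF pp p5] by simp
  have eP: "e = P - 3" unfolding e_def P_def using p5 by (simp add: of_nat_diff)
  have Pnz: "P \<noteq> 0" unfolding P_def using p5 by simp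
  have U2: "2 * U = S + e * P * V - P^2 * c1" using c1 by simp
  have "S = t * (2 * U) - e * P * s * V + P^2 * c2" using c2 by (simp add: algebra_simps)
  then have "S = t * (S + e * P * V - P^2 * c1) - e * P * s * V + P^2 * c2" unfolding U2 .
  then have "(1 - t) * S = e * P * s * V + P^2 * (c2 - t * c1)" unfolding ts by (simp add: algebra_simps)
  then have "(1 - t) * (P * B + P^2 * c3) = e * P * s * V + P^2 * (c2 - t * c1)" using c3 by simp
  then have "P * ((1 - t) * B - e * s * V) = P * (P * (c2 - t * c1 - (1 - t) * c3))"
    by (simp add: algebra_simps power2_eq_square)
  then have W: "(1 - t) * B - e * s * V = P * (c2 - t * c1 - (1 - t) * c3)"
    using Pnz by simp
  define W1 where "W1 = c2 - t * c1 - (1 - t) * c3"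
  have "V + 2 * B = P * ((8/3) * (W1 + q * B / 4 + V / 8 + P * q * V / 8 - 3 * q * V / 8))"
  proof -
    have tt: "t = (1 + P * q) / 4" using t4 by simp
    have ss: "s = (1 + P * q) / 8" using t4 ts by simp
    have "(1 - (1 + P * q) / 4) * B - (P - 3) * ((1 + P * q) / 8) * V = P * W1"
      using W unfolding W1_def tt[symmetric] ss[symmetric] eP[symmetric] .
    then show ?thesis by (simp add: field_simps)
  qed
  moreover have "pint p ((8/3) * (W1 + q * B / 4 + V / 8 + P * q * V / 8 - 3 * q * V / 8))"
  proof -
    have "pint p B" unfolding B_def using p5 by (intro pint_bernoulli[OF pp]) auto
    moreover have "pint p q" unfolding q_def by (rule pint_fq[OF pp p5])
    moreover have "pint p t" unfolding t_def using pp by simp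
    moreover have "pint p V" unfolding V_def using pp by simp
    moreover have "pint p P" unfolding P_def using pp by simp
    moreover have "punit p 3" "punit p 2" using punit_3[OF pp p5] punit_2[OF pp p5] by auto
    moreover have "punit p 8" "punit p 4" using punit_power[OF pp punit_2[OF pp p5], of 3] punit_power[OF pp punit_2[OF pp p5], of 2] by simp_all
    ultimately show ?thesis unfolding W1_def using c1 c2 c3 pp by simp
  qed
  ultimately show ?thesis unfolding V_def[symmetric] B_def[symmetric]
    by (intro pcong_intro[OF pp p5]) (auto simp: P_def algebra_simps)
qed

lemma T_V: "pcong p 1 (\<Sum>i=1..(p-1) div 2. 1 / (of_nat i :: rat) ^ 3) (\<Sum>i=1..(p-1) div 2. (of_nat i :: rat) ^ (p - 4))"
proof (intro pcong_sum[OF pp p5])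
  fix i assume "i \<in> {1..(p-1) div 2}"
  then have i: "0 < i" "i < p" by auto
  obtain t where t: "pint p t" "(of_nat i :: rat) ^ (p - 1) = 1 + of_nat p * t" using fermat_rat[OF pp p5 i] by blast
  have "(of_nat i :: rat) ^ (p - 1) = of_nat i ^ (p - 4) * of_nat i ^ 3"
    using p5 by (simp add: power_add[symmetric])
  then have "1 / (of_nat i :: rat) ^ 3 = of_nat i ^ (p - 4) + of_nat p * (- t / of_nat i ^ 3)"
    using t i by (simp add: field_simps)
  moreover have "pint p (- t / of_nat i ^ 3)" using t i by (intro pint_divide[OF pp] pint_uminus[OF pp] punit_power[OF pp] punit_j[OF pp p5]) auto
  ultimately show "pcong p 1 (1 / (of_nat i :: rat) ^ 3) ((of_nat i :: rat) ^ (p - 4))"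
    by (intro pcong_intro[OF pp p5]) auto
qed

lemma T_B: "pcong p 1 (\<Sum>i=1..(p-1) div 2. 1 / (of_nat i :: rat) ^ 3) (- 2 * bernoulli (p - 3))"
  using pcong_trans[OF pp p5 T_V V_B] .

end



lemma G1: "(of_nat ((n + k) choose k) :: rat) = (\<Prod>j=1..k. (of_nat n + of_nat j) / of_nat j)"
proof (induction k)
  case 0 then show ?case by simp
next
  case (Suc k)
  have "Suc k * (Suc (n + k) choose Suc k) = Suc (n + k) * ((n + k) choose k)"
    by (rule Suc_times_binomial)
  then have "(of_nat (Suc k) :: rat) * of_nat ((n + Suc k) choose Suc k) = of_nat (Suc (n + k)) * of_nat ((n + k) choose k)"
    by (metis add_Suc_right of_nat_mult)
  then have "(of_nat ((n + Suc k) choose Suc k) :: rat) = of_nat ((n + k) choose k) * ((of_nat n + of_nat (Suc k)) / of_nat (Suc k))"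
    by (simp add: field_simps)
  then show ?case using Suc by (simp add: prod.cl_ivl_Suc)
qed

lemma choose_step: "Suc k * (n choose Suc k) = (n - k) * (n choose k)"
  using binomial_absorption[of k n] binomial_absorb_comp[of n k] by simp

lemma G2: "k \<le> n \<Longrightarrow> (of_nat (n choose k) :: rat) = (\<Prod>j=1..k. (of_nat n + 1 - of_nat j) / of_nat j)"
proof (induction k)
  case 0 then show ?case by simp
next
  case (Suc k)
  then have kn: "k < n" by simp
  have "(of_nat (Suc k) :: rat) * of_nat (n choose Suc k) = of_nat (n - k) * of_nat (n choose k)"
    using choose_step[of k n] by (metis of_nat_mult)
  then have "(of_nat (n choose Suc k) :: rat) = of_nat (n choose k) * ((of_nat n + 1 - of_nat (Suc k)) / of_nat (Suc k))"
    using kn by (simp add: field_simps of_nat_diff)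
  then show ?case using Suc by (simp add: prod.cl_ivl_Suc)
qed

lemma cb: "Suc n * (2 * Suc n choose Suc n) = 2 * (2 * n + 1) * (2 * n choose n)"
proof -
  have a: "Suc n * (Suc (2*n+1) choose Suc n) = Suc (2*n+1) * ((2*n+1) choose n)"
    by (rule Suc_times_binomial)
  have b: "(2*n+1 - n) * ((2*n+1) choose n) = (2*n+1) * ((2*n+1-1) choose n)"
    by (rule binomial_absorb_comp)
  have h1: "2*n+1-n = Suc n" by simp
  have h2: "2*n+1-1 = 2*n" by simp
  have b': "Suc n * ((2*n+1) choose n) = (2*n+1) * (2*n choose n)" using b unfolding h1 h2 .
  have X: "Suc n * (Suc n * (2 * Suc n choose Suc n)) = Suc n * (2 * (2 * n + 1) * (2 * n choose n))"
  proof -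
    have "Suc n * (Suc n * (2 * Suc n choose Suc n)) = Suc n * (Suc (2*n+1) * ((2*n+1) choose n))"
    proof -
      have "2 * Suc n = Suc (2*n+1)" by simp
      then show ?thesis by (simp only: a)
    qed
    also have "\<dots> = Suc (2*n+1) * (Suc n * ((2*n+1) choose n))" by (simp only: mult_ac)
    also have "\<dots> = Suc (2*n+1) * ((2*n+1) * (2*n choose n))" by (simp only: b')
    also have "\<dots> = Suc n * (2 * (2 * n + 1) * (2 * n choose n))" by simp
    finally show ?thesis .
  qed
  have nz: "Suc n \<noteq> 0" by simp
  show ?thesis using mult_left_cancel[OF nz] X by blast
qed

lemma alt_harm: "(\<Sum>k=1..2*m. (-1)^(k-1) / (of_nat k :: rat)) = (\<Sum>j=1..2*m. 1 / of_nat j) - (\<Sum>j=1..m. 1 / of_nat j)"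
proof (induction m)
  case 0 then show ?case by simp
next
  case (Suc m)
  have e1: "(\<Sum>k=1..2*Suc m. (-1)^(k-1) / (of_nat k :: rat)) = (\<Sum>k=1..2*m. (-1)^(k-1) / (of_nat k :: rat)) + 1 / (2 * of_nat m + 1) - 1 / (2 * of_nat m + 2)"
    by (simp add: algebra_simps)
  have e2: "(\<Sum>j=1..2*Suc m. 1 / (of_nat j :: rat)) = (\<Sum>j=1..2*m. 1 / of_nat j) + 1 / (2 * of_nat m + 1) + 1 / (2 * of_nat m + 2)"
    by (simp add: algebra_simps)
  have e3: "(\<Sum>j=1..Suc m. 1 / (of_nat j :: rat)) = (\<Sum>j=1..m. 1 / of_nat j) + 1 / (of_nat m + 1)"
    by (simp add: algebra_simps)
  have hb: "1 / (of_nat m + 1 :: rat) = 2 * (1 / (2 * of_nat m + 2))" by (simp add: field_simps)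
  show ?case unfolding e1 e2 e3 using Suc.IH hb by linarith
qed

context fixes p :: nat assumes pp: "prime p" and p5: "p > 5"
begin

lemma PL: assumes "finite S" "\<And>j. j \<in> S \<Longrightarrow> pint p (x j)"
  shows "\<exists>r. pint p r \<and> (\<Prod>j\<in>S. 1 + of_nat p * x j) = 1 + of_nat p * (\<Sum>j\<in>S. x j) + (of_nat p)^2 * r"
  using assms
proof (induction S rule: finite_induct)
  case empty then show ?case by (intro exI[of _ 0]) (simp add: pp)
next
  case (insert a S)
  then obtain r where r: "pint p r" "(\<Prod>j\<in>S. 1 + of_nat p * x j) = 1 + of_nat p * (\<Sum>j\<in>S. x j) + (of_nat p)^2 * r"
    by blast
  have xa: "pint p (x a)" using insert by simp
  have sx: "pint p (\<Sum>j\<in>S. x j)" using insert by (intro pint_sum[OF pp]) auto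
  have "(\<Prod>j\<in>insert a S. 1 + of_nat p * x j) = (1 + of_nat p * x a) * (1 + of_nat p * (\<Sum>j\<in>S. x j) + (of_nat p)^2 * r)"
    using insert r by simp
  also have "\<dots> = 1 + of_nat p * (\<Sum>j\<in>insert a S. x j) + (of_nat p)^2 * (x a * (\<Sum>j\<in>S. x j) + r + of_nat p * x a * r)"
    using insert by (simp add: algebra_simps power2_eq_square)
  finally show ?case using r xa sx pp by (intro exI[of _ "x a * (\<Sum>j\<in>S. x j) + r + of_nat p * x a * r"]) auto
qed

end



lemma cb_rat: "(of_nat ((2 * Suc n) choose Suc n) :: rat) = 2 * (2 * of_nat n + 1) * of_nat ((2 * n) choose n) / (of_nat n + 1)"
proof -
  have "(of_nat (Suc n) :: rat) * of_nat ((2 * Suc n) choose Suc n) = 2 * (2 * of_nat n + 1) * of_nat ((2 * n) choose n)"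
  proof -
    have "(of_nat (Suc n * (2 * Suc n choose Suc n)) :: rat) = of_nat (2 * (2 * n + 1) * (2 * n choose n))"
      using cb[of n] by (rule arg_cong)
    then show ?thesis by (simp only: of_nat_mult of_nat_add of_nat_numeral of_nat_1 of_nat_Suc)
  qed
  then show ?thesis by (simp add: field_simps)
qed

lemma harm2_Suc: "harm2 (Suc n) = harm2 n + 1 / (of_nat n + 1)^2"
  unfolding harm2_def by (simp add: add.commute)

lemma tele_alg: fixes x y c H :: rat assumes "y > 0" "x \<ge> 0"
  shows "4 - (4 + H) * ((2 * x + 1) * c^2 / y)
       + (H + 1 / (x + 1)^2) / ((2 * x + 1) * (16 * y)) * (2 * (2 * x + 1) * c / (x + 1))^2 = 4 - (4 + (H + 1 / (x + 1)^2)) * ((2 * (x + 1) + 1) * (2 * (2 * x + 1) * c / (x + 1))^2 / (16 * y))"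
proof -
  define d where "d = x + 1"
  define z where "z = 2 * x + 1"
  have nz: "y \<noteq> 0" "d \<noteq> 0" "z \<noteq> 0" using assms unfolding d_def z_def by auto
  have zd: "(2 * d + 1) * z = 4 * d^2 - 1" unfolding d_def z_def by (simp add: algebra_simps power2_eq_square)
  define K where "K = z * c^2 / (4 * y * d^2)"
  have sq: "(2 * z * c / d)^2 = 4 * z^2 * c^2 / d^2" by (simp add: power_divide power_mult_distrib)
  have K1: "(4 + H) * (z * c^2 / y) = (4 + H) * 4 * d^2 * K"
    unfolding K_def using nz by (simp add: field_simps)
  have K2': "(2 * z * c / d)^2 / (z * (16 * y)) = K"
    unfolding sq K_def using nz by (simp add: power2_eq_square field_simps)
  have K2: "(H + 1 / d^2) / (z * (16 * y)) * (2 * z * c / d)^2 = (H + 1 / d^2) * K"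
    unfolding K2'[symmetric] by simp
  have K3': "(2 * d + 1) * (2 * z * c / d)^2 / (16 * y) = (2 * d + 1) * z * K"
    unfolding sq K_def using nz by (simp add: power2_eq_square field_simps)
  have K3: "(4 + (H + 1 / d^2)) * ((2 * d + 1) * (2 * z * c / d)^2 / (16 * y)) = (4 + H + 1 / d^2) * (4 * d^2 - 1) * K"
    unfolding K3' zd[symmetric] by (simp add: algebra_simps)
  have co: "- ((4 + H) * 4 * d^2) + (H + 1 / d^2) = - ((4 + H + 1 / d^2) * (4 * d^2 - 1))"
    using nz by (simp add: field_simps power2_eq_square)
  have "4 - (4 + H) * 4 * d^2 * K + (H + 1 / d^2) * K = 4 + (- ((4 + H) * 4 * d^2) + (H + 1 / d^2)) * K"
    by (simp add: algebra_simps)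
  also have "\<dots> = 4 - (4 + H + 1 / d^2) * (4 * d^2 - 1) * K" unfolding co by (simp add: algebra_simps)
  finally have "4 - (4 + H) * (z * c^2 / y) + (H + 1 / d^2) / (z * (16 * y)) * (2 * z * c / d)^2
     = 4 - (4 + (H + 1 / d^2)) * ((2 * d + 1) * (2 * z * c / d)^2 / (16 * y))"
    unfolding K1 K2 K3 .
  then show ?thesis unfolding d_def z_def .
qed

lemma tele_sum: "(\<Sum>k=1..N. harm2 k / ((2 * of_nat k - 1) * 16^k) * (of_nat ((2*k) choose k))^2)
   = 4 - (4 + harm2 N) * ((2 * of_nat N + 1) * (of_nat ((2*N) choose N))^2 / 16^N)"
proof (induction N)
  case 0 then show ?case by (simp add: harm2_def)
next
  case (Suc N)
  define c where "c = (of_nat ((2*N) choose N) :: rat)"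
  define H where "H = harm2 N"
  define x where "x = (of_nat N :: rat)"
  define y where "y = (16::rat) ^ N"
  have ypos: "y > 0" unfolding y_def by simp
  have xpos: "x \<ge> 0" unfolding x_def by simp
  have IH: "(\<Sum>k=1..N. harm2 k / ((2 * of_nat k - 1) * 16^k) * (of_nat ((2*k) choose k))^2) = 4 - (4 + H) * ((2 * x + 1) * c^2 / y)"
    using Suc.IH unfolding c_def H_def x_def y_def .
  have e16: "(16::rat)^Suc N = 16 * y" unfolding y_def by simp
  have eS: "(of_nat (Suc N) :: rat) = x + 1" unfolding x_def by simp
  have eh: "harm2 (Suc N) = H + 1 / (x + 1)^2" unfolding H_def x_def by (rule harm2_Suc)
  have ec: "(of_nat ((2 * Suc N) choose Suc N) :: rat) = 2 * (2 * x + 1) * c / (x + 1)" unfolding c_def x_def by (rule cb_rat)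
  have "(\<Sum>k=1..Suc N. harm2 k / ((2 * of_nat k - 1) * 16^k) * (of_nat ((2*k) choose k))^2)
     = (\<Sum>k=1..N. harm2 k / ((2 * of_nat k - 1) * 16^k) * (of_nat ((2*k) choose k))^2)
       + harm2 (Suc N) / ((2 * of_nat (Suc N) - 1) * 16^(Suc N)) * (of_nat ((2*Suc N) choose Suc N))^2"
    by simp
  also have "\<dots> = 4 - (4 + H) * ((2 * x + 1) * c^2 / y)
       + (H + 1 / (x + 1)^2) / ((2 * x + 1) * (16 * y)) * (2 * (2 * x + 1) * c / (x + 1))^2"
    by (simp only: IH e16 eS eh ec) (simp add: algebra_simps)
  also have "\<dots> = 4 - (4 + (H + 1 / (x + 1)^2)) * ((2 * (x + 1) + 1) * (2 * (2 * x + 1) * c / (x + 1))^2 / (16 * y))"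
    by (rule tele_alg[OF ypos xpos])
  also have "\<dots> = 4 - (4 + harm2 (Suc N)) * ((2 * of_nat (Suc N) + 1) * (of_nat ((2*Suc N) choose Suc N))^2 / 16^(Suc N))"
    by (simp only: e16 eS eh ec)
  finally show ?case .
qed




context fixes p :: nat assumes pp: "prime p" and p5: "p > 5"
begin

lemma Gm: assumes "k \<le> p - 1"
  shows "\<exists>w. pint p w \<and> (of_nat ((p - 1) choose k) :: rat) = (-1)^k * (1 - of_nat p * (\<Sum>j=1..k. 1 / of_nat j) + (of_nat p)^2 * w)"
proof -
  have "(of_nat ((p - 1) choose k) :: rat) = (\<Prod>j=1..k. (of_nat (p - 1) + 1 - of_nat j) / of_nat j)"
    by (rule G2[OF assms])
  also have "\<dots> = (\<Prod>j=1..k. (-1) * (1 + of_nat p * (- 1 / of_nat j)))"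
  proof (intro prod.cong refl)
    fix j assume "j \<in> {1..k}"
    then have "j \<ge> 1" by simp
    moreover have "(of_nat (p - 1) :: rat) + 1 = of_nat p" using p5 by (simp add: of_nat_diff)
    ultimately show "(of_nat (p - 1) + 1 - of_nat j) / of_nat j = (-1) * (1 + of_nat p * (- 1 / of_nat j) :: rat)"
      by (simp add: field_simps)
  qed
  also have "\<dots> = (-1)^k * (\<Prod>j=1..k. 1 + of_nat p * (- 1 / of_nat j :: rat))"
    by (subst prod.distrib) simp
  finally have e: "(of_nat ((p - 1) choose k) :: rat) = (-1)^k * (\<Prod>j=1..k. 1 + of_nat p * (- 1 / of_nat j :: rat))" .
  obtain r where r: "pint p r" "(\<Prod>j=1..k. 1 + of_nat p * (- 1 / of_nat j :: rat)) = 1 + of_nat p * (\<Sum>j=1..k. - 1 / of_nat j) + (of_nat p)^2 * r"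
  proof -
    have side: "pint p (- 1 / of_nat j)" if "j \<in> {1..k}" for j
      using that assms by (intro pint_divide[OF pp] punit_j[OF pp p5]) (auto simp: pp)
    show ?thesis using PL[OF pp p5 finite_atLeastAtMost[of 1 k], of "\<lambda>j. - 1 / of_nat j", OF side] that by blast
  qed
  have "(\<Sum>j=1..k. - 1 / of_nat j :: rat) = - (\<Sum>j=1..k. 1 / of_nat j)" by (simp add: sum_negf)
  then show ?thesis using e r by (intro exI[of _ r]) simp
qed

lemma Dfact: "\<exists>d. pint p d \<and> (of_nat ((2 * p) choose p) :: rat) = 2 * (1 + (of_nat p)^2 * d)"
proof -
  have pS: "p = Suc (p - 1)" using p5 by simp
  have "(of_nat ((2 * p) choose p) :: rat) = (\<Prod>j=1..p. (of_nat p + of_nat j) / of_nat j)"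
    using G1[of p p] by (simp add: mult_2)
  also have "\<dots> = (\<Prod>j=1..p-1. (of_nat p + of_nat j) / of_nat j) * ((of_nat p + of_nat p) / of_nat p)"
    by (subst pS, subst prod.cl_ivl_Suc) (use p5 in \<open>simp add: pS[symmetric]\<close>)
  also have "\<dots> = (\<Prod>j=1..p-1. 1 + of_nat p * (1 / of_nat j)) * 2"
  proof -
    have "(\<Prod>j=1..p-1. (of_nat p + of_nat j) / of_nat j) = (\<Prod>j=1..p-1. 1 + of_nat p * (1 / (of_nat j :: rat)))"
      by (intro prod.cong refl) (auto simp: field_simps)
    moreover have "(of_nat p + of_nat p) / (of_nat p :: rat) = 2" using p5 by simp
    ultimately show ?thesis by simp
  qed
  finally have e: "(of_nat ((2 * p) choose p) :: rat) = 2 * (\<Prod>j=1..p-1. 1 + of_nat p * (1 / of_nat j))" by simp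
  obtain r where r: "pint p r" "(\<Prod>j=1..p-1. 1 + of_nat p * (1 / of_nat j :: rat)) = 1 + of_nat p * (\<Sum>j=1..p-1. 1 / of_nat j) + (of_nat p)^2 * r"
  proof -
    have side: "pint p (1 / of_nat j)" if "j \<in> {1..p-1}" for j
      using that p5 by (intro pint_divide[OF pp] punit_j[OF pp p5]) (auto simp: pp)
    show ?thesis using PL[OF pp p5 finite_atLeastAtMost[of 1 "p-1"], of "\<lambda>j. 1 / of_nat j", OF side] that by blast
  qed
  obtain h where h: "pint p h" "(\<Sum>j=1..p-1. 1 / of_nat j :: rat) = 0 + (of_nat p)^1 * h"
    using H1[OF pp p5] unfolding pcong_def by blast
  have "(of_nat ((2 * p) choose p) :: rat) = 2 * (1 + (of_nat p)^2 * (h + r))"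
    using e r h by (simp add: algebra_simps power2_eq_square)
  then show ?thesis using h r pp by (intro exI[of _ "h + r"]) simp
qed

lemma crec: "\<exists>d. pint p d \<and> (2 * of_nat p - 1) * (of_nat ((2 * (p - 1)) choose (p - 1)) :: rat) = of_nat p * (1 + (of_nat p)^2 * d)"
proof -
  obtain d where d: "pint p d" "(of_nat ((2 * p) choose p) :: rat) = 2 * (1 + (of_nat p)^2 * d)"
    using Dfact by blast
  have pS: "p = Suc (p - 1)" using p5 by simp
  have "(of_nat ((2 * Suc (p - 1)) choose Suc (p - 1)) :: rat) = 2 * (2 * of_nat (p - 1) + 1) * of_nat ((2 * (p - 1)) choose (p - 1)) / (of_nat (p - 1) + 1)"
    by (rule cb_rat)
  moreover have "2 * Suc (p - 1) = 2 * p" using pS by simp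
  moreover have "(of_nat (p - 1) :: rat) = of_nat p - 1" using p5 by (simp add: of_nat_diff)
  ultimately have "2 * (1 + (of_nat p)^2 * d) = 2 * (2 * (of_nat p - 1) + 1) * (of_nat ((2 * (p - 1)) choose (p - 1)) :: rat) / (of_nat p - 1 + 1)"
    using d pS by simp
  then have "of_nat p * (2 * (1 + (of_nat p)^2 * d)) = 2 * ((2 * of_nat p - 1) * (of_nat ((2 * (p - 1)) choose (p - 1)) :: rat))"
    using p5 by (simp add: field_simps)
  then have "2 * ((2 * of_nat p - 1) * (of_nat ((2 * (p - 1)) choose (p - 1)) :: rat)) = 2 * (of_nat p * (1 + (of_nat p)^2 * d))"
    by (simp add: algebra_simps)
  then have "(2 * of_nat p - 1) * (of_nat ((2 * (p - 1)) choose (p - 1)) :: rat) = of_nat p * (1 + (of_nat p)^2 * d)"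
    by simp
  then show ?thesis using d by blast
qed

end



context fixes p :: nat assumes pp: "prime p" and p5: "p > 5"
begin

lemma binom_pk: assumes "k \<in> {1..p-1}"
  shows "\<exists>w. pint p w \<and> (of_nat (p choose k) :: rat) = of_nat p * ((-1)^(k-1) / of_nat k) + (of_nat p)^2 * w"
proof -
  have k: "0 < k" "k < p" "k - 1 \<le> p - 1" using assms by auto
  obtain w0 where w0: "pint p w0" "(of_nat ((p - 1) choose (k - 1)) :: rat) = (-1)^(k-1) * (1 - of_nat p * (\<Sum>j=1..k-1. 1 / of_nat j) + (of_nat p)^2 * w0)"
    using Gm[OF pp p5 k(3)] by blast
  define s where "s = (\<Sum>j=1..k-1. 1 / (of_nat j :: rat))"
  have sp: "pint p s" unfolding s_def using k by (intro pint_sum[OF pp] pint_divide[OF pp] punit_j[OF pp p5]) (auto simp: pp)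
  have "k * (p choose k) = p * ((p - 1) choose (k - 1))" using times_binomial_minus1_eq[OF k(1)] .
  then have "(of_nat k :: rat) * of_nat (p choose k) = of_nat p * of_nat ((p - 1) choose (k - 1))"
    by (metis of_nat_mult)
  then have "(of_nat (p choose k) :: rat) = of_nat p * of_nat ((p - 1) choose (k - 1)) / of_nat k"
    using k by (simp add: field_simps)
  also have "\<dots> = of_nat p * ((-1)^(k-1) * (1 - of_nat p * s + (of_nat p)^2 * w0)) / of_nat k"
    unfolding w0(2) s_def ..
  also have "\<dots> = of_nat p * ((-1)^(k-1) / of_nat k) + (of_nat p)^2 * ((-1)^(k-1) * (- s + of_nat p * w0) / of_nat k)"
    using k by (simp add: field_simps power2_eq_square)
  finally show ?thesis using sp w0 k
    by (intro exI[of _ "(-1)^(k-1) * (- s + of_nat p * w0) / of_nat k"]) (auto intro!: pint_divide[OF pp] punit_j[OF pp p5] simp: pp)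
qed

lemma Eis: "\<exists>e. pint p e \<and> (\<Sum>j=1..(p-1) div 2. 1 / (of_nat j :: rat)) = - 2 * fermat_quot2 p + of_nat p * e"
proof -
  define P where "P = (of_nat p :: rat)"
  have "\<forall>k\<in>{1..p-1}. \<exists>w. pint p w \<and> (of_nat (p choose k) :: rat) = P * ((-1)^(k-1) / of_nat k) + P^2 * w"
    using binom_pk unfolding P_def by blast
  then obtain w where w: "\<And>k. k \<in> {1..p-1} \<Longrightarrow> pint p (w k) \<and> (of_nat (p choose k) :: rat) = P * ((-1)^(k-1) / of_nat k) + P^2 * w k"
    by metis
  define Alt where "Alt = (\<Sum>k=1..p-1. (-1)^(k-1) / (of_nat k :: rat))"
  define W where "W = (\<Sum>k=1..p-1. w k)"
  have Wp: "pint p W" unfolding W_def using w by (intro pint_sum[OF pp]) auto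
  have s1: "(\<Sum>k=1..p-1. (of_nat (p choose k) :: rat)) = P * Alt + P^2 * W"
    unfolding Alt_def W_def sum_distrib_left sum.distrib[symmetric] using w by (intro sum.cong) auto
  have pS: "p = Suc (p - 1)" using p5 by simp
  have "(2::rat) ^ p = of_nat (\<Sum>k\<le>p. p choose k)" by (simp add: choose_row_sum)
  also have "\<dots> = (\<Sum>k=0..p. (of_nat (p choose k) :: rat))" by (simp add: atMost_atLeast0)
  also have "\<dots> = 1 + (\<Sum>k=1..p. (of_nat (p choose k) :: rat))" by (simp add: sum.atLeast_Suc_atMost)
  also have "(\<Sum>k=1..p. (of_nat (p choose k) :: rat)) = (\<Sum>k=1..p-1. (of_nat (p choose k) :: rat)) + 1"
    by (subst pS, subst sum.cl_ivl_Suc) (use p5 in \<open>simp flip: pS\<close>)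
  finally have s2: "(2::rat) ^ p = 2 + P * Alt + P^2 * W" using s1 by simp
  have "(2::rat) ^ p = 2 * 2 ^ (p - 1)" by (subst pS) simp
  then have "(2::rat) ^ p = 2 + 2 * P * fermat_quot2 p" using fq2[OF pp p5] unfolding P_def by simp
  then have "P * (2 * fermat_quot2 p) = P * (Alt + P * W)" using s2 by (simp add: algebra_simps power2_eq_square)
  then have a: "2 * fermat_quot2 p = Alt + P * W" unfolding P_def using p5 by simp
  define m where "m = (p - 1) div 2"
  have pm: "p - 1 = 2 * m" using p_odd[OF pp p5] unfolding m_def by simp
  have b: "Alt = (\<Sum>j=1..p-1. 1 / of_nat j) - (\<Sum>j=1..m. 1 / (of_nat j :: rat))"
    unfolding Alt_def pm by (rule alt_harm)
  obtain h where h: "pint p h" "(\<Sum>j=1..p-1. 1 / of_nat j :: rat) = 0 + (of_nat p)^1 * h"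
    using H1[OF pp p5] unfolding pcong_def by blast
  have "(\<Sum>j=1..m. 1 / (of_nat j :: rat)) = - 2 * fermat_quot2 p + P * (h + W)"
    using a b h unfolding P_def by (simp add: algebra_simps)
  then show ?thesis using h Wp pp unfolding m_def P_def by (intro exI[of _ "h + W"]) simp
qed

lemma Cfact: "\<exists>g. pint p g \<and> (of_nat ((2 * ((p-1) div 2)) choose ((p-1) div 2)) :: rat)^2 = 1 + 4 * of_nat p * fermat_quot2 p + (of_nat p)^2 * g"
proof -
  define m where "m = (p - 1) div 2"
  define P where "P = (of_nat p :: rat)"
  define q where "q = fermat_quot2 p"
  have pm: "2 * m = p - 1" using p_odd[OF pp p5] unfolding m_def by simp
  have mle: "m \<le> p - 1" using pm by simp
  obtain w where w: "pint p w" "(of_nat ((p - 1) choose m) :: rat) = (-1)^m * (1 - P * (\<Sum>j=1..m. 1 / of_nat j) + P^2 * w)"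
    using Gm[OF pp p5 mle] unfolding P_def by blast
  obtain e where e: "pint p e" "(\<Sum>j=1..m. 1 / (of_nat j :: rat)) = - 2 * q + P * e"
    using Eis unfolding m_def P_def q_def by blast
  define z where "z = 2 * q + P * (w - e)"
  have zp: "pint p z" unfolding z_def P_def q_def using w e pint_fq[OF pp p5] pp by simp
  have "(of_nat ((p - 1) choose m) :: rat) = (-1)^m * (1 + P * z)"
    unfolding w(2) e(2) z_def by (simp add: algebra_simps power2_eq_square)
  then have "(of_nat ((p - 1) choose m) :: rat)^2 = (1 + P * z)^2"
    by (simp add: power_mult_distrib flip: power_mult)
  also have "\<dots> = 1 + 4 * P * q + P^2 * (2 * (w - e) + z^2)"
    unfolding z_def by (simp add: algebra_simps power2_eq_square)
  finally show ?thesis using zp w e pp unfolding pm[symmetric] m_def[symmetric] P_def q_def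
    by (intro exI[of _ "2 * (w - e) + z^2"]) simp
qed

end



lemma poly1: fixes P Bt a d q :: rat
  shows "(4 + (2 * P * Bt + P^2 * a)) * (1 + P^2 * d)^2 + (4 + 8 * P - 16 * P * q + 2 * P * Bt) * (2 * P - 1) * (1 + P * q)^4
     = P^2 * ((16) + (-32) * q + (40) * q^2 + (8) * d + (1) * a + (4) * Bt + (-8) * Bt * q + (64) * P * q + (-128) * P * q^2 + (80) * P * q^3 + (16) * P * Bt * q + (-12) * P * Bt * q^2 + (4) * P * Bt * d + (96) * P^2 * q^2 + (-192) * P^2 * q^3 + (60) * P^2 * q^4 + (4) * P^2 * d^2 + (2) * P^2 * a * d + (24) * P^2 * Bt * q^2 + (-8) * P^2 * Bt * q^3 + (64) * P^3 * q^3 + (-128) * P^3 * q^4 + (16) * P^3 * q^5 + (16) * P^3 * Bt * q^3 + (-2) * P^3 * Bt * q^4 + (2) * P^3 * Bt * d^2 + (16) * P^4 * q^4 + (-32) * P^4 * q^5 + (1) * P^4 * a * d^2 + (4) * P^4 * Bt * q^4)"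
  by (simp add: algebra_simps eval_nat_numeral)

lemma poly2: fixes P Bt h g q :: rat
  shows "(4 + 8 * P * q + 7 * P * Bt) * (1 + P * q)^2 - (4 + (7 * P * Bt + P^2 * h)) * (1 + 4 * P * q + P^2 * g)
     = P^2 * ((-4) * g + (-1) * h + (20) * q^2 + (-14) * Bt * q + (-4) * P * q * h + (8) * P * q^3 + (-7) * P * Bt * g + (7) * P * Bt * q^2 + (-1) * P^2 * h * g)"
  by (simp add: algebra_simps eval_nat_numeral)

lemma pow16: "(16::rat) ^ n = ((2::rat) ^ n) ^ 4"
proof -
  have "((2::rat) ^ n) ^ 4 = 2 ^ (n * 4)" by (simp only: power_mult)
  also have "\<dots> = 2 ^ (4 * n)" by (simp only: mult.commute)
  also have "\<dots> = (2 ^ 4) ^ n" by (simp only: power_mult)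
  finally show ?thesis by simp
qed

lemma pow16': "(16::rat) ^ n = ((2::rat) ^ (2 * n)) ^ 2"
proof -
  have "((2::rat) ^ (2 * n)) ^ 2 = 2 ^ (2 * n * 2)" by (simp only: power_mult)
  also have "\<dots> = 2 ^ (4 * n)" by simp
  also have "\<dots> = (2 ^ 4) ^ n" by (simp only: power_mult)
  finally show ?thesis by simp
qed

theorem corollary1p4:
  fixes p :: nat
  assumes "prime p" and "p > 5"
  shows "qcong (\<Sum>k=1..p-1. harm2 k / ((2 * of_nat k - 1) * 16^k) * (of_nat ((2*k) choose k))^2)
            (4 + (of_nat p)^2 * (4 + 8 * of_nat p - 16 * of_nat p * fermat_quot2 p
                 + 2/3 * of_nat p * bernoulli (p-3)))
            (int p ^ 4)
       \<and> qcong (\<Sum>k=1..(p-1) div 2. harm2 k / ((2 * of_nat k - 1) * 16^k) * (of_nat ((2*k) choose k))^2)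
            (4 - of_nat p * (4 + 8 * of_nat p * fermat_quot2 p + 7/3 * of_nat p * bernoulli (p-3)))
            (int p ^ 3)"
proof -
  have pp: "prime p" and p5: "p > 5" using assms by auto
  define P where "P = (of_nat p :: rat)"
  define q where "q = fermat_quot2 p"
  define B where "B = bernoulli (p - 3)"
  define Bt where "Bt = B / 3"
  define m where "m = (p - 1) div 2"
  have Pnz: "P \<noteq> 0" unfolding P_def using p5 by simp
  have pB: "pint p B" unfolding B_def using p5 by (intro pint_bernoulli[OF pp]) auto
  have pq: "pint p q" unfolding q_def by (rule pint_fq[OF pp p5])
  have p3: "punit p 3" by (rule punit_3[OF pp p5])
  have p6: "punit p 6" using punit_mult[OF pp punit_2[OF pp p5] punit_3[OF pp p5]] by simp
  have pBt: "pint p Bt" unfolding Bt_def using pB p3 pp by simp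
  have pP: "pint p P" unfolding P_def using pp by simp
  have fq: "(2::rat) ^ (p - 1) = 1 + P * q" unfolding P_def q_def by (rule fq2[OF pp p5])
  have pv: "punit p (1 + P * q)" unfolding P_def using punit_add_p[OF pp punit_1[OF pp] pq] .
  have pu: "punit p (2 * P - 1)"
  proof -
    have "punit p (- 1 + of_nat p * 2)" by (rule punit_add_p[OF pp punit_uminus[OF pp punit_1[OF pp]]]) (simp add: pp)
    then show ?thesis unfolding P_def by (simp add: algebra_simps)
  qed
  have unz: "2 * P - 1 \<noteq> 0"
  proof -
    have "P > 5" unfolding P_def using p5 by simp
    then show ?thesis by linarith
  qed
  have vnz: "1 + P * q \<noteq> 0"
  proof
    assume "1 + P * q = 0"
    then have "(2::rat) ^ (p - 1) = 0" using fq by simp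
    then show False by simp
  qed
  define T where "T = (\<Sum>i=1..(p-1) div 2. 1 / (of_nat i :: rat) ^ 3)"
  obtain t where t: "pint p t" "T = - 2 * B + P ^ 1 * t"
    using T_B[OF pp p5] unfolding pcong_def T_def B_def P_def by blast
  define A where "A = (\<Sum>j=1..p-1. 1 / (of_nat j :: rat)^2)"
  define Hh where "Hh = (\<Sum>i=1..(p-1) div 2. 1 / (of_nat i :: rat)^2)"
  obtain a0 where a0: "pint p a0" "A = - (1/3) * P * T + P^2 * a0"
    using A_T[OF pp p5] unfolding pcong_def T_def A_def P_def by blast
  obtain h0 where h0: "pint p h0" "Hh = - (7/6) * P * T + P^2 * h0"
    using Hh_T[OF pp p5] unfolding pcong_def T_def Hh_def P_def by blast
  define a where "a = a0 - t / 3"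
  define h where "h = h0 - 7 * t / 6"
  have pa: "pint p a" unfolding a_def using a0 t p3 pp by simp
  have ph: "pint p h" unfolding h_def using h0 t p6 pp by simp
  have Aeq: "A = 2 * P * Bt + P^2 * a"
    unfolding a0(2) t(2) a_def Bt_def by (simp add: algebra_simps power2_eq_square)
  have Heq: "Hh = 7 * P * Bt + P^2 * h"
    unfolding h0(2) t(2) h_def Bt_def by (simp add: field_simps power2_eq_square)
  have part1: "qcong (\<Sum>k=1..p-1. harm2 k / ((2 * of_nat k - 1) * 16^k) * (of_nat ((2*k) choose k))^2)
            (4 + (of_nat p)^2 * (4 + 8 * of_nat p - 16 * of_nat p * fermat_quot2 p
                 + 2/3 * of_nat p * bernoulli (p-3)))
            (int p ^ 4)"
  proof -
    obtain d where d: "pint p d" "(2 * P - 1) * (of_nat ((2 * (p - 1)) choose (p - 1)) :: rat) = P * (1 + P^2 * d)"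
      using crec[OF pp p5] unfolding P_def by blast
    define u where "u = 2 * P - 1"
    define v where "v = 1 + P * q"
    define D where "D = 1 + P^2 * d"
    define X where "X = 4 + 8 * P - 16 * P * q + 2 * P * Bt"
    define M where "M = ((16) + (-32) * q + (40) * q^2 + (8) * d + (1) * a + (4) * Bt + (-8) * Bt * q + (64) * P * q + (-128) * P * q^2 + (80) * P * q^3 + (16) * P * Bt * q + (-12) * P * Bt * q^2 + (4) * P * Bt * d + (96) * P^2 * q^2 + (-192) * P^2 * q^3 + (60) * P^2 * q^4 + (4) * P^2 * d^2 + (2) * P^2 * a * d + (24) * P^2 * Bt * q^2 + (-8) * P^2 * Bt * q^3 + (64) * P^3 * q^3 + (-128) * P^3 * q^4 + (16) * P^3 * q^5 + (16) * P^3 * Bt * q^3 + (-2) * P^3 * Bt * q^4 + (2) * P^3 * Bt * d^2 + (16) * P^4 * q^4 + (-32) * P^4 * q^5 + (1) * P^4 * a * d^2 + (4) * P^4 * Bt * q^4)"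
    have ceq: "(of_nat ((2 * (p - 1)) choose (p - 1)) :: rat) = P * D / u"
      using d(2) unz unfolding u_def D_def by (simp add: field_simps)
    have e1: "2 * of_nat (p - 1) + 1 = u" unfolding u_def P_def using p5 by (simp add: of_nat_diff)
    have e16: "(16::rat) ^ (p - 1) = v ^ 4"
    proof -
      have "(16::rat) ^ (p - 1) = ((2::rat) ^ (p - 1)) ^ 4" by (rule pow16)
      then show ?thesis unfolding fq v_def .
    qed
    have eH: "harm2 (p - 1) = A" unfolding harm2_def A_def ..
    have S: "(\<Sum>k=1..p-1. harm2 k / ((2 * of_nat k - 1) * 16^k) * (of_nat ((2*k) choose k))^2)
       = 4 - (4 + A) * (u * (P * D / u)^2 / v^4)"
      using tele_sum[of "p - 1"] unfolding eH e1 ceq e16 .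
    have tgt: "(4 + (of_nat p)^2 * (4 + 8 * of_nat p - 16 * of_nat p * fermat_quot2 p
                 + 2/3 * of_nat p * bernoulli (p-3)) :: rat) = 4 + P^2 * X"
      unfolding X_def P_def[symmetric] q_def[symmetric] B_def[symmetric] Bt_def by simp
    have unz': "u \<noteq> 0" "v \<noteq> 0" using unz vnz unfolding u_def v_def by auto
    have "4 - (4 + A) * (u * (P * D / u)^2 / v^4) - (4 + P^2 * X) = - (P^2 * ((4 + A) * D^2 + X * u * v^4) / (u * v^4))"
      using unz' by (simp add: field_simps power2_eq_square)
    also have "(4 + A) * D^2 + X * u * v^4 = P^2 * M"
      unfolding Aeq D_def X_def u_def v_def M_def by (rule poly1)
    finally have eq: "4 - (4 + A) * (u * (P * D / u)^2 / v^4) - (4 + P^2 * X) = P^4 * (- M / (u * v^4))"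
      by (simp add: power_add[symmetric])
    have pc:  "pint p (- M / (u * v^4))"
      unfolding u_def v_def M_def using pu pv pP pq pBt pa d(1) pp
      by (intro pint_divide[OF pp] punit_mult[OF pp] punit_power[OF pp]) (simp_all)
    show ?thesis using qcong_intro[OF pp eq[unfolded P_def] pc] unfolding S tgt P_def .
  qed
  have part2: "qcong (\<Sum>k=1..(p-1) div 2. harm2 k / ((2 * of_nat k - 1) * 16^k) * (of_nat ((2*k) choose k))^2)
            (4 - of_nat p * (4 + 8 * of_nat p * fermat_quot2 p + 7/3 * of_nat p * bernoulli (p-3)))
            (int p ^ 3)"
  proof -
    obtain g where g: "pint p g" "(of_nat ((2 * m) choose m) :: rat)^2 = 1 + 4 * P * q + P^2 * g"
      using Cfact[OF pp p5] unfolding m_def P_def q_def by blast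
    define v where "v = 1 + P * q"
    define Y where "Y = 4 + 8 * P * q + 7 * P * Bt"
    define C2 where "C2 = 1 + 4 * P * q + P^2 * g"
    define M where "M = ((-4) * g + (-1) * h + (20) * q^2 + (-14) * Bt * q + (-4) * P * q * h + (8) * P * q^3 + (-7) * P * Bt * g + (7) * P * Bt * q^2 + (-1) * P^2 * h * g)"
    have pm: "p = 2 * m + 1" unfolding m_def by (rule p_odd[OF pp p5])
    have e1: "2 * of_nat m + 1 = P" unfolding P_def by (subst pm) simp
    have e16: "(16::rat) ^ m = v ^ 2"
    proof -
      have "(16::rat) ^ m = ((2::rat) ^ (2 * m)) ^ 2" by (rule pow16')
      also have "2 * m = p - 1" using pm by simp
      finally show ?thesis unfolding fq v_def .
    qed
    have eH: "harm2 m = Hh" unfolding harm2_def Hh_def m_def ..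
    have S: "(\<Sum>k=1..(p-1) div 2. harm2 k / ((2 * of_nat k - 1) * 16^k) * (of_nat ((2*k) choose k))^2)
       = 4 - (4 + Hh) * (P * C2 / v^2)"
      using tele_sum[of m] unfolding m_def[symmetric] eH e1 e16 g(2) C2_def .
    have tgt: "(4 - of_nat p * (4 + 8 * of_nat p * fermat_quot2 p + 7/3 * of_nat p * bernoulli (p-3)) :: rat) = 4 - P * Y"
      unfolding Y_def P_def[symmetric] q_def[symmetric] B_def[symmetric] Bt_def by simp
    have vnz': "v \<noteq> 0" using vnz unfolding v_def by auto
    have "4 - (4 + Hh) * (P * C2 / v^2) - (4 - P * Y) = P * (Y * v^2 - (4 + Hh) * C2) / v^2"
      using vnz' by (simp add: field_simps)
    also have "Y * v^2 - (4 + Hh) * C2 = P^2 * M"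
      unfolding Heq Y_def v_def C2_def M_def by (rule poly2)
    finally have eq: "4 - (4 + Hh) * (P * C2 / v^2) - (4 - P * Y) = P^3 * (M / v^2)"
      by (simp add: power3_eq_cube power2_eq_square)
    have pc:  "pint p (M / v^2)"
      unfolding v_def M_def using pv pP pq pBt ph g(1) pp
      by (intro pint_divide[OF pp] punit_power[OF pp]) (simp_all)
    show ?thesis using qcong_intro[OF pp eq[unfolded P_def] pc] unfolding S tgt P_def .
  qed
  show ?thesis using part1 part2 by blast
qed


end
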